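(* Let the number of agents be even, $n=2p$. Then the Bloc formation mechanism Nash implements the majority correspondence $Maj$ in the following sense: for every preference profile $R$ with $|Maj(R)|=1$, every Nash equilibrium outcome is $Maj(R)$; and for every $R$ with $Maj(R)=\{a,b\}$, the unique Nash equilibrium outcome is the lottery assigning probability $1/2$ to each of $a$ and $b$.
   Context: Agents $I=\{1,\dots,n\}$, $n=2p$, options $A=\{a,b\}$, each agent with a strict preference over $A$; preferences over lotteries follow stochastic dominance: an agent preferring $x$ weakly (strictly) prefers $\beta$ to $\eta$ iff $\beta(x)\ge\eta(x)$ ($>$). Majority correspondence: $Maj(R)=a$ if $|\{i:aR_ib\}|\ge p+1$, $Maj(R)=b$ if $|\{i:bR_ia\}|\ge p+1$, and $Maj(R)=\{a,b\}$ otherwise. Bloc formation mechanism: each agent sends $m_i=(v_i,c_i)$ with $v_i\in A$ and $c_i$ a set of exactly $p$ agents other than $i$. For $x\in A$, a set $B$ with $|B|\ge p+1$ is a bloc in favor of $x$ in $m$ if $v_i=x$ and $c_i\subseteq B$ for every $i\in B$. If $m$ admits a bloc in favor of $x$ the outcome is $x$; otherwise the outcome is the lottery $\eta(m)$ with $\eta^x(m)=\sum_{i}\eta_i(m)\mathbf 1\{v_i=x\}$, $\eta_i(m)=|\{j\ne i: i\in c_j\}|/(np)$. *)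

theory Defs
  imports Complex_Main
begin

datatype alt = Alt_a | Alt_b

text \<open>Agents are 1..n.  A preference of agent i is a relation R i x y meaning x R_i y.
  It is strict: reflexive, complete, antisymmetric (over two options, transitive).\<close>
definition strict_pref :: "(alt \<Rightarrow> alt \<Rightarrow> bool) \<Rightarrow> bool" where
  "strict_pref P \<longleftrightarrow> (\<forall>x. P x x) \<and> (\<forall>x y. x \<noteq> y \<longrightarrow> (P x y \<longleftrightarrow> \<not> P y x))"

text \<open>Lotteries over A are functions alt => real.  Degenerate lottery on x.\<close>
definition deg :: "alt \<Rightarrow> alt \<Rightarrow> real" where
  "deg x = (\<lambda>y. if y = x then 1 else 0)"

definition sd_strict :: "(nat \<Rightarrow> alt \<Rightarrow> alt \<Rightarrow> bool) \<Rightarrow> nat \<Rightarrow> (alt \<Rightarrow> real) \<Rightarrow> (alt \<Rightarrow> real) \<Rightarrow> bool" where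
  "sd_strict R i \<beta> \<eta> \<longleftrightarrow> (\<exists>x. (\<forall>y. R i x y) \<and> \<beta> x > \<eta> x)"

definition maj :: "nat \<Rightarrow> nat \<Rightarrow> (nat \<Rightarrow> alt \<Rightarrow> alt \<Rightarrow> bool) \<Rightarrow> alt set" where
  "maj n p R =
     (if card {i \<in> {1..n}. R i Alt_a Alt_b} \<ge> p + 1 then {Alt_a}
      else if card {i \<in> {1..n}. R i Alt_b Alt_a} \<ge> p + 1 then {Alt_b}
      else {Alt_a, Alt_b})"

type_synonym msg = "alt \<times> nat set"

definition valid_msg :: "nat \<Rightarrow> nat \<Rightarrow> nat \<Rightarrow> msg \<Rightarrow> bool" where
  "valid_msg n p i d \<longleftrightarrow> snd d \<subseteq> {1..n} - {i} \<and> card (snd d) = p"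

definition is_bloc :: "nat \<Rightarrow> nat \<Rightarrow> (nat \<Rightarrow> msg) \<Rightarrow> alt \<Rightarrow> nat set \<Rightarrow> bool" where
  "is_bloc n p m x B \<longleftrightarrow> B \<subseteq> {1..n} \<and> card B \<ge> p + 1 \<and>
      (\<forall>i\<in>B. fst (m i) = x \<and> snd (m i) \<subseteq> B)"

definition eta_agent :: "nat \<Rightarrow> nat \<Rightarrow> (nat \<Rightarrow> msg) \<Rightarrow> nat \<Rightarrow> real" where
  "eta_agent n p m i = real (card {j \<in> {1..n}. j \<noteq> i \<and> i \<in> snd (m j)}) / (real n * real p)"

definition eta_lot :: "nat \<Rightarrow> nat \<Rightarrow> (nat \<Rightarrow> msg) \<Rightarrow> alt \<Rightarrow> real" where
  "eta_lot n p m x = (\<Sum>i\<in>{1..n}. if fst (m i) = x then eta_agent n p m i else 0)"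

text \<open>Outcome of the bloc formation mechanism (at most one option can have a bloc,
  since blocs for different options are disjoint and each has more than p agents).\<close>
definition outcome :: "nat \<Rightarrow> nat \<Rightarrow> (nat \<Rightarrow> msg) \<Rightarrow> alt \<Rightarrow> real" where
  "outcome n p m =
     (if \<exists>B. is_bloc n p m Alt_a B then deg Alt_a
      else if \<exists>B. is_bloc n p m Alt_b B then deg Alt_b
      else eta_lot n p m)"

definition nash_eq :: "nat \<Rightarrow> nat \<Rightarrow> (nat \<Rightarrow> alt \<Rightarrow> alt \<Rightarrow> bool) \<Rightarrow> (nat \<Rightarrow> msg) \<Rightarrow> bool" where
  "nash_eq n p R m \<longleftrightarrow> (\<forall>i\<in>{1..n}. valid_msg n p i (m i)) \<and>
     (\<forall>i\<in>{1..n}. \<forall>d. valid_msg n p i d \<longrightarrow> \<not> sd_strict R i (outcome n p (m(i := d))) (outcome n p m))"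

definition NE_outcomes :: "nat \<Rightarrow> nat \<Rightarrow> (nat \<Rightarrow> alt \<Rightarrow> alt \<Rightarrow> bool) \<Rightarrow> (alt \<Rightarrow> real) set" where
  "NE_outcomes n p R = {outcome n p m | m. nash_eq n p R m}"

end

theory Submission imports Defs begin

fun oth :: "alt \<Rightarrow> alt" where "oth Alt_a = Alt_b" | "oth Alt_b = Alt_a"

lemma oth_neq[simp]: "oth x \<noteq> x" by (cases x) auto
lemma oth_neq2[simp]: "x \<noteq> oth x" by (cases x) auto
lemma oth_oth[simp]: "oth (oth x) = x" by (cases x) auto
lemma neq_oth: "y \<noteq> x \<Longrightarrow> y = oth x" by (cases x; cases y) auto

definition Pc :: "nat \<Rightarrow> (nat \<Rightarrow> msg) \<Rightarrow> alt \<Rightarrow> nat" where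
  "Pc n m x = (\<Sum>j\<in>{1..n}. card (snd (m j) \<inter> {k\<in>{1..n}. fst (m k) = x}))"

definition validp :: "nat \<Rightarrow> nat \<Rightarrow> (nat \<Rightarrow> msg) \<Rightarrow> bool" where
  "validp n p m \<longleftrightarrow> (\<forall>i\<in>{1..n}. valid_msg n p i (m i))"

lemma card_split:
  assumes "finite S" "S \<subseteq> A \<union> B" "A \<inter> B = {}"
  shows "card (S \<inter> A) + card (S \<inter> B) = card S"
proof -
  have "card ((S \<inter> A) \<union> (S \<inter> B)) = card (S \<inter> A) + card (S \<inter> B)"
    by (rule card_Un_disjoint) (use assms in auto)
  moreover have "(S \<inter> A) \<union> (S \<inter> B) = S" using assms(2) by auto
  ultimately show ?thesis by simp
qed

lemma nob_from:
  assumes "\<And>B. \<not> is_bloc n p m x B" "\<And>B. \<not> is_bloc n p m (oth x) B"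
  shows "\<forall>z B. \<not> is_bloc n p m z B"
proof (intro allI)
  fix z B
  show "\<not> is_bloc n p m z B"
  proof (cases "z = x")
    case True then show ?thesis using assms(1) by simp
  next
    case False then have "z = oth x" by (rule neq_oth)
    then show ?thesis using assms(2) by simp
  qed
qed

lemma validpD:
  "validp n p m \<Longrightarrow> j \<in> {1..n} \<Longrightarrow> snd (m j) \<subseteq> {1..n} - {j} \<and> card (snd (m j)) = p"
  unfolding validp_def valid_msg_def by blast

lemma validp_msg: "validp n p m \<Longrightarrow> j \<in> {1..n} \<Longrightarrow> valid_msg n p j (m j)"
  unfolding validp_def by blast

lemma eta_pos:
  assumes "n > 0" "p > 0" "card {j\<in>{1..n}. j \<noteq> i \<and> i \<in> snd (m j)} \<noteq> 0"
  shows "eta_agent n p m i > 0"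
proof -
  have "card {j\<in>{1..n}. j \<noteq> i \<and> i \<in> snd (m j)} > 0" using assms(3) by linarith
  then show ?thesis using assms(1,2) unfolding eta_agent_def by (intro divide_pos_pos) auto
qed

lemma closed_card:
  assumes "X \<subseteq> {1..n}" "j \<in> X" "valid_msg n p j (m j)" "snd (m j) \<subseteq> X"
  shows "card X \<ge> p + 1"
proof -
  have f: "finite X" using finite_subset[OF assms(1)] by simp
  have "snd (m j) \<subseteq> X - {j}" using assms(3,4) unfolding valid_msg_def by auto
  hence "card (snd (m j)) \<le> card (X - {j})" using f by (intro card_mono) auto
  moreover have "card (X - {j}) = card X - 1" using assms(2) f by simp
  moreover have "card X \<noteq> 0" using f assms(2) by auto
  ultimately show ?thesis using assms(3) unfolding valid_msg_def by auto
qed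

lemma bloc_disj:
  assumes "n = 2*p" "x \<noteq> y" "is_bloc n p m x A" "is_bloc n p m y B" shows False
proof -
  have "A \<inter> B = {}" using assms unfolding is_bloc_def by auto
  have fin: "finite A" "finite B" using assms(3,4) unfolding is_bloc_def by (auto intro: finite_subset)
  have "card (A \<union> B) = card A + card B" using card_Un_disjoint fin \<open>A\<inter>B={}\<close> by blast
  moreover have "card (A \<union> B) \<le> n" using card_mono[of "{1..n}" "A\<union>B"] assms(3,4) unfolding is_bloc_def by auto
  ultimately show False using assms unfolding is_bloc_def by auto
qed

lemma outcome_bloc:
  assumes "n = 2*p" "is_bloc n p m x B" shows "outcome n p m = deg x"
proof (cases x)
  case Alt_a then show ?thesis using assms unfolding outcome_def by auto
next
  case Alt_b then show ?thesis using assms bloc_disj[of n p Alt_a Alt_b m _ B] unfolding outcome_def by auto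
qed

lemma outcome_nobloc:
  assumes "\<forall>x B. \<not> is_bloc n p m x B" shows "outcome n p m = eta_lot n p m"
  using assms unfolding outcome_def by auto

lemma dc:
  fixes n :: nat and m :: "nat \<Rightarrow> msg"
  assumes "\<forall>j\<in>{1..n}. snd (m j) \<subseteq> {1..n} - {j}" "V \<subseteq> {1..n}"
  shows "(\<Sum>k\<in>V. card {j\<in>{1..n}. j \<noteq> k \<and> k \<in> snd (m j)}) = (\<Sum>j\<in>{1..n}. card (snd (m j) \<inter> V))"
proof -
  have fV: "finite V" using finite_subset[OF assms(2)] by simp
  have "(\<Sum>k\<in>V. card {j\<in>{1..n}. j \<noteq> k \<and> k \<in> snd (m j)}) = (\<Sum>k\<in>V. \<Sum>j\<in>{1..n}. if k \<in> snd (m j) then 1 else 0)"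
  proof (rule sum.cong[OF refl])
    fix k assume "k \<in> V"
    have "{j\<in>{1..n}. j \<noteq> k \<and> k \<in> snd (m j)} = {j\<in>{1..n}. k \<in> snd (m j)}" using assms(1) by auto
    then show "card {j\<in>{1..n}. j \<noteq> k \<and> k \<in> snd (m j)} = (\<Sum>j\<in>{1..n}. if k \<in> snd (m j) then 1 else 0)"
      by (simp add: sum.inter_filter[symmetric])
  qed
  also have "\<dots> = (\<Sum>j\<in>{1..n}. \<Sum>k\<in>V. if k \<in> snd (m j) then 1 else 0)" by (rule sum.swap)
  also have "\<dots> = (\<Sum>j\<in>{1..n}. card (snd (m j) \<inter> V))"
  proof (rule sum.cong[OF refl])
    fix j assume "j \<in> {1..n}"
    have "snd (m j) \<inter> V = {k\<in>V. k \<in> snd (m j)}" by auto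
    then show "(\<Sum>k\<in>V. if k \<in> snd (m j) then 1 else 0) = card (snd (m j) \<inter> V)"
      using fV by (simp add: sum.inter_filter[symmetric])
  qed
  finally show ?thesis .
qed

lemma eta_P:
  assumes "validp n p m"
  shows "eta_lot n p m x = real (Pc n m x) / (real n * real p)"
proof -
  let ?V = "{k\<in>{1..n}. fst (m k) = x}"
  have "eta_lot n p m x = (\<Sum>k\<in>?V. eta_agent n p m k)"
    unfolding eta_lot_def by (rule sum.inter_filter[symmetric]) simp
  also have "\<dots> = (\<Sum>k\<in>?V. real (card {j\<in>{1..n}. j \<noteq> k \<and> k \<in> snd (m j)})) / (real n * real p)"
    unfolding eta_agent_def by (simp add: sum_divide_distrib)
  also have "(\<Sum>k\<in>?V. real (card {j\<in>{1..n}. j \<noteq> k \<and> k \<in> snd (m j)})) = real (Pc n m x)"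
    unfolding Pc_def of_nat_sum[symmetric]
    by (rule arg_cong[where f=real], rule dc) (use validpD[OF assms] in auto)
  finally show ?thesis .
qed

lemma P_total:
  assumes "validp n p m"
  shows "Pc n m x + Pc n m (oth x) = n * p"
proof -
  have "Pc n m x + Pc n m (oth x) = (\<Sum>j\<in>{1..n}. card (snd (m j)))"
    unfolding Pc_def sum.distrib[symmetric]
  proof (rule sum.cong[OF refl])
    fix j assume j: "j \<in> {1..n}"
    have s: "snd (m j) \<subseteq> {1..n}" using validpD[OF assms j] by auto
    have fs: "finite (snd (m j))" using finite_subset[OF s] by simp
    have sub: "snd (m j) \<subseteq> {k\<in>{1..n}. fst (m k) = x} \<union> {k\<in>{1..n}. fst (m k) = oth x}"
      using s neq_oth by auto
    have dj: "{k\<in>{1..n}. fst (m k) = x} \<inter> {k\<in>{1..n}. fst (m k) = oth x} = {}"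
      by auto
    show "card (snd (m j) \<inter> {k\<in>{1..n}. fst (m k) = x}) + card (snd (m j) \<inter> {k\<in>{1..n}. fst (m k) = oth x}) = card (snd (m j))"
      by (rule card_split[OF fs sub dj])
  qed
  also have "\<dots> = (\<Sum>j\<in>{1..n}. p)"
    by (intro sum.cong) (use validpD[OF assms] in auto)
  finally show ?thesis by simp
qed

lemma eta_nonneg: "eta_lot n p m x \<ge> 0"
  unfolding eta_lot_def eta_agent_def by (intro sum_nonneg) auto

lemma eta_total:
  assumes "validp n p m" "n > 0" "p > 0"
  shows "eta_lot n p m x + eta_lot n p m (oth x) = 1"
proof -
  have "real (Pc n m x) + real (Pc n m (oth x)) = real n * real p"
    using P_total[OF assms(1), of x] by (metis of_nat_add of_nat_mult)
  then show ?thesis using assms by (simp add: eta_P add_divide_distrib[symmetric])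
qed

lemma eta_le1:
  assumes "validp n p m" "n > 0" "p > 0"
  shows "eta_lot n p m x \<le> 1"
  using eta_total[OF assms, of x] eta_nonneg[of n p m "oth x"] by linarith

lemma outcome_le1:
  assumes "validp n p m" "n = 2*p" "p > 0"
  shows "outcome n p m x \<le> 1"
  using eta_le1[OF assms(1) _ assms(3)] assms(2,3) unfolding outcome_def deg_def by auto


definition Sx :: "nat \<Rightarrow> (nat \<Rightarrow> alt \<Rightarrow> alt \<Rightarrow> bool) \<Rightarrow> alt \<Rightarrow> nat set" where
  "Sx n R x = {i\<in>{1..n}. R i x (oth x)}"

lemma top_iff:
  assumes "strict_pref P" shows "(\<forall>w. P z w) \<longleftrightarrow> P z (oth z)"
proof
  assume h: "P z (oth z)"
  show "\<forall>w. P z w"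
  proof
    fix w show "P z w"
    proof (cases "w = z")
      case True then show ?thesis using assms unfolding strict_pref_def by simp
    next
      case False then have "w = oth z" by (rule neq_oth)
      then show ?thesis using h by simp
    qed
  qed
qed simp

lemma Sx_oth:
  assumes "\<forall>i\<in>{1..n}. strict_pref (R i)" "i \<in> {1..n}"
  shows "i \<in> Sx n R (oth x) \<longleftrightarrow> i \<notin> Sx n R x"
proof -
  have sp: "strict_pref (R i)" using assms by blast
  have h: "R i u v \<longleftrightarrow> \<not> R i v u" if "u \<noteq> v" for u v
    using sp that unfolding strict_pref_def by blast
  have "R i (oth x) x \<longleftrightarrow> \<not> R i x (oth x)" using h[of "oth x" x] by simp
  then show ?thesis using assms(2) unfolding Sx_def by simp
qed

lemma Sx_card:
  assumes "\<forall>i\<in>{1..n}. strict_pref (R i)"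
  shows "card (Sx n R x) + card (Sx n R (oth x)) = n"
proof -
  have "Sx n R x \<union> Sx n R (oth x) = {1..n}" using Sx_oth[OF assms] unfolding Sx_def by auto
  moreover have "Sx n R x \<inter> Sx n R (oth x) = {}" using Sx_oth[OF assms] unfolding Sx_def by auto
  moreover have "finite (Sx n R x)" "finite (Sx n R (oth x))" unfolding Sx_def by auto
  moreover have "card (Sx n R x \<union> Sx n R (oth x)) = card (Sx n R x) + card (Sx n R (oth x))"
    by (rule card_Un_disjoint) (use calculation in auto)
  ultimately show ?thesis by simp
qed

lemma maj_single:
  assumes "\<forall>i\<in>{1..n}. strict_pref (R i)" "n = 2*p" "maj n p R = {x}"
  shows "card (Sx n R x) \<ge> p + 1"
proof -
  have a: "{i \<in> {1..n}. R i Alt_a Alt_b} = Sx n R Alt_a" "{i \<in> {1..n}. R i Alt_b Alt_a} = Sx n R Alt_b"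
    unfolding Sx_def by auto
  show ?thesis using assms(3) unfolding maj_def a by (cases x) (auto split: if_splits)
qed

lemma maj_tie:
  assumes "\<forall>i\<in>{1..n}. strict_pref (R i)" "n = 2*p" "maj n p R = {Alt_a, Alt_b}"
  shows "card (Sx n R x) = p"
proof -
  have a: "{i \<in> {1..n}. R i Alt_a Alt_b} = Sx n R Alt_a" "{i \<in> {1..n}. R i Alt_b Alt_a} = Sx n R Alt_b"
    unfolding Sx_def by auto
  have "\<not> card (Sx n R Alt_a) \<ge> p + 1" "\<not> card (Sx n R Alt_b) \<ge> p + 1"
    using assms(3) unfolding maj_def a by (auto split: if_splits)
  moreover have "card (Sx n R Alt_a) + card (Sx n R Alt_b) = n" using Sx_card[OF assms(1), of Alt_a] by simp
  ultimately show ?thesis using assms(2) by (cases x) auto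
qed

lemma bloc_upd:
  assumes "i \<notin> B" shows "is_bloc n p (m(i:=d)) x B \<longleftrightarrow> is_bloc n p m x B"
  using assms unfolding is_bloc_def by auto

lemma bloc_fin: "is_bloc n p m x B \<Longrightarrow> finite B"
  unfolding is_bloc_def by (auto intro: finite_subset)

lemma bloc_int:
  assumes "validp n p m" "n = 2*p" "is_bloc n p m x K" "is_bloc n p m x A"
  shows "is_bloc n p m x (K \<inter> A)"
proof -
  have fK: "finite K" "finite A" using assms(3,4) bloc_fin by auto
  have "card (K \<union> A) \<le> n" using card_mono[of "{1..n}" "K\<union>A"] assms(3,4) unfolding is_bloc_def by auto
  moreover have "card (K \<union> A) + card (K \<inter> A) = card K + card A" using card_Un_Int[OF fK(1) fK(2)] by simp
  ultimately have "card (K \<inter> A) > 0" using assms(2,3,4) unfolding is_bloc_def by auto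
  then obtain j where j: "j \<in> K \<inter> A" by (metis card_gt_0_iff ex_in_conv)
  have cl: "\<forall>i\<in>K \<inter> A. fst (m i) = x \<and> snd (m i) \<subseteq> K \<inter> A" using assms(3,4) unfolding is_bloc_def by auto
  have sub: "K \<inter> A \<subseteq> {1..n}" using assms(3) unfolding is_bloc_def by auto
  have jN: "j \<in> {1..n}" using j sub by auto
  have "snd (m j) \<subseteq> K \<inter> A" using cl j by blast
  from closed_card[where X="K \<inter> A" and n=n and j=j and p=p and m=m, OF sub j validp_msg[OF assms(1) jN] this]
  have "card (K \<inter> A) \<ge> p + 1" .
  then show ?thesis using cl sub unfolding is_bloc_def by auto
qed

lemma eta_agent_upd: "eta_agent n p (m(i:=d)) i = eta_agent n p m i"
  unfolding eta_agent_def by (rule arg_cong[where f="\<lambda>S. real (card S) / _"]) auto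

lemma eta_ge_agent:
  assumes "i \<in> {1..n}" "fst (m i) = y"
  shows "eta_lot n p m y \<ge> eta_agent n p m i"
proof -
  have "eta_agent n p m i = (if fst (m i) = y then eta_agent n p m i else 0)" using assms by simp
  also have "\<dots> \<le> eta_lot n p m y" unfolding eta_lot_def
    by (rule member_le_sum) (use assms in \<open>auto simp: eta_agent_def\<close>)
  finally show ?thesis .
qed

lemma nash_dev:
  assumes "nash_eq n p R m" "i \<in> {1..n}" "valid_msg n p i d" "\<forall>w. R i y w"
  shows "outcome n p (m(i:=d)) y \<le> outcome n p m y"
  using assms unfolding nash_eq_def sd_strict_def by (meson not_le)

lemma validp_upd: "validp n p m \<Longrightarrow> valid_msg n p i d \<Longrightarrow> validp n p (m(i:=d))"
  unfolding validp_def by auto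

lemma no_bloc_against:
  assumes ne: "nash_eq n p R m" and cS: "card (Sx n R y) \<ge> p" and B: "is_bloc n p m (oth y) B"
    and np: "n = 2*p" and p1: "p \<ge> 1" and pr: "\<forall>i\<in>{1..n}. strict_pref (R i)"
  shows False
proof -
  define x where "x = oth y"
  have vm: "validp n p m" using ne unfolding nash_eq_def validp_def by blast
  define k where "k = (LEAST k. \<exists>B. is_bloc n p m x B \<and> card B = k)"
  have "\<exists>K. is_bloc n p m x K \<and> card K = k" unfolding k_def
    by (rule LeastI_ex) (use B x_def in blast)
  then obtain K where K: "is_bloc n p m x K" "card K = k" by blast
  have Kmin: "card K \<le> card A" if "is_bloc n p m x A" for A
    unfolding K(2) k_def by (rule Least_le) (use that in blast)
  have fK: "finite K" using K bloc_fin by blast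
  have KN: "K \<subseteq> {1..n}" using K unfolding is_bloc_def by auto
  have SN: "Sx n R y \<subseteq> {1..n}" unfolding Sx_def by auto
  have "card (K \<union> Sx n R y) \<le> card {1..n}" by (rule card_mono) (use KN SN in auto)
  hence "card (K \<union> Sx n R y) \<le> n" by simp
  moreover have fS: "finite (Sx n R y)" using finite_subset[OF SN] by simp
  moreover have "card (K \<union> Sx n R y) + card (K \<inter> Sx n R y) = card K + card (Sx n R y)"
    using card_Un_Int[OF fK fS] by simp
  ultimately have "card (K \<inter> Sx n R y) > 0" using np cS K unfolding is_bloc_def by auto
  then obtain i where i: "i \<in> K" "i \<in> Sx n R y" by (metis card_gt_0_iff ex_in_conv IntE)
  have iN: "i \<in> {1..n}" using i KN by auto
  have topi: "\<forall>w. R i y w" using i(2) top_iff pr iN unfolding Sx_def by blast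
  have indeg: "eta_agent n p m i > 0"
  proof (rule ccontr)
    assume "\<not> eta_agent n p m i > 0"
    hence "card {j\<in>{1..n}. j \<noteq> i \<and> i \<in> snd (m j)} = 0" using eta_pos[where n=n and p=p and m=m and i=i] np p1 by fastforce
    hence e: "{j\<in>{1..n}. j \<noteq> i \<and> i \<in> snd (m j)} = {}" by simp
    have cl: "\<forall>j\<in>K - {i}. fst (m j) = x \<and> snd (m j) \<subseteq> K - {i}"
      using K(1) e KN unfolding is_bloc_def by blast
    have "card K \<ge> 2" using K p1 unfolding is_bloc_def by auto
    hence "card (K - {i}) > 0" using fK i by simp
    then obtain j where j: "j \<in> K - {i}" by (metis card_gt_0_iff ex_in_conv)
    have jN: "j \<in> {1..n}" using j KN by auto
    have sj: "snd (m j) \<subseteq> K - {i}" using cl j by blast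
    have KiN: "K - {i} \<subseteq> {1..n}" using KN by auto
    have "card (K - {i}) \<ge> p + 1"
      using closed_card[where X="K - {i}" and n=n and j=j and p=p and m=m, OF KiN j validp_msg[OF vm jN] sj] .
    hence "is_bloc n p m x (K - {i})" using cl KN unfolding is_bloc_def by auto
    from Kmin[OF this] have "card K \<le> card (K - {i})" .
    moreover have "card K > 0" using fK i card_gt_0_iff by blast
    ultimately show False using fK i by (simp add: card_Diff_singleton)
  qed
  define d where "d = (y, snd (m i))"
  have vd: "valid_msg n p i d" using validpD[OF vm iN] unfolding d_def valid_msg_def by auto
  have om: "outcome n p m = deg x" using outcome_bloc[OF np K(1)] .
  have "outcome n p m y = 0" unfolding om deg_def x_def by simp
  moreover have "outcome n p (m(i:=d)) y > 0"
  proof (cases "\<exists>A. is_bloc n p (m(i:=d)) y A")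
    case True
    then show ?thesis using outcome_bloc[OF np] by (auto simp: deg_def)
  next
    case False
    have nx: "\<not> is_bloc n p (m(i:=d)) x A" for A
    proof
      assume A: "is_bloc n p (m(i:=d)) x A"
      have "i \<notin> A" using A unfolding is_bloc_def d_def x_def by auto
      hence A': "is_bloc n p m x A" using A bloc_upd[of i A n p m d x] by simp
      have "is_bloc n p m x (K \<inter> A)" using bloc_int[OF vm np K(1) A'] .
      from Kmin[OF this] have "card K \<le> card (K \<inter> A)" .
      moreover have "K \<inter> A \<subset> K" using i \<open>i \<notin> A\<close> by blast
      hence "card (K \<inter> A) < card K" by (rule psubset_card_mono[OF fK])
      ultimately show False by simp
    qed
    have "\<forall>z B. \<not> is_bloc n p (m(i:=d)) z B"
      using nob_from[of n p "m(i:=d)" y] False nx unfolding x_def by blast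
    hence "outcome n p (m(i:=d)) = eta_lot n p (m(i:=d))" by (rule outcome_nobloc)
    moreover have "eta_lot n p (m(i:=d)) y \<ge> eta_agent n p (m(i:=d)) i"
      by (rule eta_ge_agent) (use iN d_def in auto)
    ultimately show ?thesis using indeg eta_agent_upd by (metis less_le_trans)
  qed
  ultimately show False using nash_dev[OF ne iN vd topi] by simp
qed


definition Vs :: "nat \<Rightarrow> (nat \<Rightarrow> msg) \<Rightarrow> alt \<Rightarrow> nat set" where
  "Vs n m x = {k\<in>{1..n}. fst (m k) = x}"

lemma Pc_Vs: "Pc n m x = (\<Sum>j\<in>{1..n}. card (snd (m j) \<inter> Vs n m x))"
  unfolding Pc_def Vs_def ..

lemma Vs_union: "Vs n m x \<union> Vs n m (oth x) = {1..n}"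
  unfolding Vs_def using neq_oth by auto
lemma Vs_disj: "Vs n m x \<inter> Vs n m (oth x) = {}"
  unfolding Vs_def by auto
lemma Vs_fin[simp]: "finite (Vs n m x)" unfolding Vs_def by auto

lemma Vs_card: "card (Vs n m x) + card (Vs n m (oth x)) = n"
  using card_Un_disjoint[OF Vs_fin Vs_fin Vs_disj, of n m x] Vs_union[of n m x] by simp

lemma split_card:
  assumes "validp n p m" "j \<in> {1..n}"
  shows "card (snd (m j) \<inter> Vs n m x) + card (snd (m j) \<inter> Vs n m (oth x)) = p"
proof -
  have s: "snd (m j) \<subseteq> {1..n}" and c: "card (snd (m j)) = p"
    using validpD[OF assms] by auto
  have fs: "finite (snd (m j))" using finite_subset[OF s] by simp
  have sub: "snd (m j) \<subseteq> Vs n m x \<union> Vs n m (oth x)"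
    using s Vs_union[of n m x] by simp
  show ?thesis using card_split[OF fs sub Vs_disj] c by simp
qed

lemma half:
  assumes vm: "validp n p m" and np: "n = 2*p" and p1: "p \<ge> 1"
    and cV: "\<And>z. card (Vs n m z) = p" and cl: "\<And>z i. i \<in> Vs n m z \<Longrightarrow> Vs n m z - {i} \<subseteq> snd (m i)"
  shows "eta_lot n p m x = 1/2"
proof -
  have inter1: "snd (m j) \<inter> Vs n m z = Vs n m z - {j}" if "j \<in> Vs n m z" for j z
  proof -
    have "j \<notin> snd (m j)" "snd (m j) \<subseteq> {1..n}" using validpD[OF vm, of j] that unfolding Vs_def by auto
    then show ?thesis using cl[OF that] by auto
  qed
  have c1: "card (snd (m j) \<inter> Vs n m z) = p - 1" if "j \<in> Vs n m z" for j z
    unfolding inter1[OF that] using that cV[of z] by simp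
  have c2: "card (snd (m j) \<inter> Vs n m x) = 1" if "j \<in> Vs n m (oth x)" for j
  proof -
    have "j \<in> {1..n}" using that unfolding Vs_def by auto
    from split_card[OF vm this, of "oth x"] c1[OF that] p1 show ?thesis by simp
  qed
  have "Pc n m x = (\<Sum>j\<in>Vs n m x. card (snd (m j) \<inter> Vs n m x)) + (\<Sum>j\<in>Vs n m (oth x). card (snd (m j) \<inter> Vs n m x))"
    unfolding Pc_Vs Vs_union[of n m x, symmetric] by (rule sum.union_disjoint) (auto simp: Vs_disj)
  also have "\<dots> = (\<Sum>j\<in>Vs n m x. p - 1) + (\<Sum>j\<in>Vs n m (oth x). 1)"
    using c1 c2 by simp
  also have "\<dots> = p * p" using cV[of x] cV[of "oth x"] p1 by (simp add: algebra_simps)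
  finally have "Pc n m x = p * p" .
  then show ?thesis using eta_P[OF vm, of x] np p1 by simp
qed

lemma eta_agent_snd:
  assumes "\<And>j. snd (m' j) = snd (m j)" shows "eta_agent n p m' = eta_agent n p m"
  using assms unfolding eta_agent_def by (intro ext) simp

context
  fixes n p :: nat and R :: "nat \<Rightarrow> alt \<Rightarrow> alt \<Rightarrow> bool" and m :: "nat \<Rightarrow> msg"
  assumes np: "n = 2*p" and p1: "p \<ge> 1" and pr: "\<forall>i\<in>{1..n}. strict_pref (R i)"
    and ne: "nash_eq n p R m" and nob: "\<forall>z B. \<not> is_bloc n p m z B"
begin

lemma vm: "validp n p m" using ne unfolding nash_eq_def validp_def by blast

lemma gain:
  assumes iN: "i \<in> {1..n}" and iS: "i \<in> Sx n R x" and vd: "valid_msg n p i d" and fd: "fst d = x"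
  shows "eta_lot n p (m(i:=d)) x \<le> eta_lot n p m x"
proof -
  have topi: "\<forall>w. R i x w" using iS top_iff pr iN unfolding Sx_def by blast
  have om: "outcome n p m = eta_lot n p m" using outcome_nobloc nob by blast
  have dv: "outcome n p (m(i:=d)) x \<le> eta_lot n p m x" using nash_dev[OF ne iN vd topi] om by simp
  have noo: "\<not> is_bloc n p (m(i:=d)) (oth x) B" for B
  proof
    assume B: "is_bloc n p (m(i:=d)) (oth x) B"
    have "i \<notin> B" using B fd unfolding is_bloc_def by auto
    then have "is_bloc n p m (oth x) B" using B bloc_upd[of i B n p m d "oth x"] by simp
    then show False using nob by blast
  qed
  have vm': "validp n p (m(i:=d))" using validp_upd[OF vm vd] .
  show ?thesis
  proof (cases "\<exists>B. is_bloc n p (m(i:=d)) x B")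
    case True
    then have "outcome n p (m(i:=d)) = deg x" using outcome_bloc[OF np] by blast
    then have "1 \<le> eta_lot n p m x" using dv by (simp add: deg_def)
    moreover have "eta_lot n p (m(i:=d)) x \<le> 1" using eta_le1[OF vm'] np p1 by simp
    ultimately show ?thesis by simp
  next
    case False
    then have nb: "\<forall>z B. \<not> is_bloc n p (m(i:=d)) z B" using nob_from[of n p "m(i:=d)" x] noo by blast
    show ?thesis using outcome_nobloc[OF nb] dv by simp
  qed
qed

lemma F1:
  assumes iN: "i \<in> {1..n}" and iS: "i \<in> Sx n R x" and fi: "fst (m i) \<noteq> x"
    and jN: "j \<in> {1..n}" and ij: "i \<in> snd (m j)"
  shows False
proof -
  define d where "d = (x, snd (m i))"
  have vd: "valid_msg n p i d" using validpD[OF vm iN] unfolding d_def valid_msg_def by auto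
  have ea: "eta_agent n p (m(i:=d)) = eta_agent n p m" by (rule eta_agent_snd) (simp add: d_def)
  let ?f = "\<lambda>m' k. if fst (m' k) = x then eta_agent n p m k else 0"
  have "eta_lot n p (m(i:=d)) x = ?f (m(i:=d)) i + (\<Sum>k\<in>{1..n} - {i}. ?f (m(i:=d)) k)"
    unfolding eta_lot_def ea by (rule sum.remove) (use iN in auto)
  also have "(\<Sum>k\<in>{1..n} - {i}. ?f (m(i:=d)) k) = (\<Sum>k\<in>{1..n} - {i}. ?f m k)"
    by (rule sum.cong) auto
  also have "?f (m(i:=d)) i = eta_agent n p m i" by (simp add: d_def)
  also have "(\<Sum>k\<in>{1..n} - {i}. ?f m k) = eta_lot n p m x - ?f m i"
    unfolding eta_lot_def by (subst sum.remove[of _ i]) (use iN in auto)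
  also have "?f m i = 0" using fi by simp
  finally have "eta_lot n p (m(i:=d)) x = eta_agent n p m i + eta_lot n p m x" by (simp add: fun_upd_def)
  with gain[OF iN iS vd] have "eta_agent n p m i \<le> 0" by (simp add: d_def)
  hence "card {j\<in>{1..n}. j \<noteq> i \<and> i \<in> snd (m j)} = 0" using eta_pos[where n=n and p=p and m=m and i=i] np p1 by fastforce
  hence "{j\<in>{1..n}. j \<noteq> i \<and> i \<in> snd (m j)} = {}" by simp
  moreover have "j \<noteq> i" using validpD[OF vm jN] ij by auto
  ultimately show False using jN ij by blast
qed

lemma F2:
  assumes iN: "i \<in> {1..n}" and iS: "i \<in> Sx n R x" and fi: "fst (m i) = x"
    and y: "y \<in> snd (m i)" "fst (m y) \<noteq> x"
    and z: "z \<in> {1..n}" "z \<noteq> i" "fst (m z) = x" "z \<notin> snd (m i)"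
  shows False
proof -
  define C where "C = insert z (snd (m i) - {y})"
  define d where "d = (x, C)"
  have s: "snd (m i) \<subseteq> {1..n} - {i}" and c: "card (snd (m i)) = p"
    using validpD[OF vm iN] by auto
  have fs: "finite (snd (m i))" using finite_subset[OF s] by simp
  have "card C = p" unfolding C_def using fs y z c p1 by (simp add: card_Diff_singleton)
  hence vd: "valid_msg n p i d" unfolding valid_msg_def d_def C_def using s z by auto
  have VV: "Vs n (m(i:=d)) x = Vs n m x" unfolding Vs_def d_def using fi by auto
  have yV: "y \<notin> Vs n m x" using y unfolding Vs_def by auto
  have zV: "z \<in> Vs n m x" using z unfolding Vs_def by auto
  have CV: "C \<inter> Vs n m x = insert z (snd (m i) \<inter> Vs n m x)" unfolding C_def using yV zV by auto
  have cC: "card (C \<inter> Vs n m x) = card (snd (m i) \<inter> Vs n m x) + 1"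
    unfolding CV using fs z by simp
  let ?g = "\<lambda>m' j. card (snd (m' j) \<inter> Vs n m x)"
  have "Pc n (m(i:=d)) x = ?g (m(i:=d)) i + (\<Sum>j\<in>{1..n} - {i}. ?g (m(i:=d)) j)"
    unfolding Pc_Vs VV by (rule sum.remove) (use iN in auto)
  also have "(\<Sum>j\<in>{1..n} - {i}. ?g (m(i:=d)) j) = (\<Sum>j\<in>{1..n} - {i}. ?g m j)"
    by (rule sum.cong) auto
  also have "?g (m(i:=d)) i = ?g m i + 1" using cC by (simp add: d_def)
  also have "?g m i + 1 + (\<Sum>j\<in>{1..n} - {i}. ?g m j) = Pc n m x + 1"
    unfolding Pc_Vs by (subst sum.remove[of _ i]) (use iN in auto)
  finally have P: "Pc n (m(i:=d)) x = Pc n m x + 1" .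
  have "eta_lot n p (m(i:=d)) x = (real (Pc n m x) + 1) / (real n * real p)"
    using eta_P[OF validp_upd[OF vm vd]] P by simp
  also have "\<dots> > eta_lot n p m x" using eta_P[OF vm] np p1 by (simp add: divide_strict_right_mono)
  finally show False using gain[OF iN iS vd] d_def by simp
qed


lemma noin:
  assumes jN: "j \<in> {1..n}" and k: "k \<in> snd (m j)"
  shows "k \<in> Sx n R (fst (m k))"
proof (rule ccontr)
  assume a: "k \<notin> Sx n R (fst (m k))"
  have kN: "k \<in> {1..n}" using validpD[OF vm jN] k by auto
  have "k \<in> Sx n R (oth (fst (m k)))" using Sx_oth[OF pr kN] a by simp
  from F1[OF kN this _ jN k] show False by simp
qed

lemma clo:
  assumes iN: "i \<in> {1..n}" and g: "i \<in> Sx n R x" and fi: "fst (m i) = x"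
  shows "snd (m i) \<subseteq> Vs n m x \<or> Vs n m x - {i} \<subseteq> snd (m i)"
proof (rule ccontr)
  assume "\<not> ?thesis"
  then obtain y z where y: "y \<in> snd (m i)" "y \<notin> Vs n m x" and z: "z \<in> Vs n m x" "z \<noteq> i" "z \<notin> snd (m i)"
    by blast
  have "y \<in> {1..n}" using validpD[OF vm iN] y by auto
  hence "fst (m y) \<noteq> x" using y unfolding Vs_def by auto
  moreover have "z \<in> {1..n}" "fst (m z) = x" using z unfolding Vs_def by auto
  ultimately show False using F2[OF iN g fi y(1) _ _ z(2) _ z(3)] by blast
qed

lemma small1:
  assumes "j \<in> {1..n}" "snd (m j) \<subseteq> X" "finite X" "card X < p" shows False
proof -
  have "card (snd (m j)) = p" using validpD[OF vm assms(1)] by auto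
  moreover have "card (snd (m j)) \<le> card X" using assms card_mono by blast
  ultimately show False using assms by simp
qed

lemma small2:
  assumes "j \<in> {1..n}" "snd (m j) \<subseteq> X" "finite X" "card X \<le> p" "j \<in> X" shows False
proof -
  have "snd (m j) \<subseteq> X - {j}" using validpD[OF vm assms(1)] assms(2) by auto
  moreover have "card (X - {j}) < p" using assms p1 by simp
  ultimately show False using small1[OF assms(1)] assms(3) by blast
qed

lemma stepA: "card (Vs n m x) \<le> p"
proof (rule ccontr)
  assume "\<not> ?thesis"
  hence big: "card (Vs n m x) \<ge> p + 1" by simp
  define G where "G = {i\<in>Vs n m x. i \<in> Sx n R (fst (m i))}"
  have Gcl: "snd (m i) \<subseteq> G" if iG: "i \<in> G" for i
  proof -
    have iN: "i \<in> {1..n}" and fi: "fst (m i) = x" and g: "i \<in> Sx n R x"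
      using iG unfolding G_def Vs_def by auto
    have s: "snd (m i) \<subseteq> {1..n} - {i}" and c: "card (snd (m i)) = p"
      using validpD[OF vm iN] by auto
    have fs: "finite (snd (m i))" using finite_subset[OF s] by simp
    have "snd (m i) \<subseteq> Vs n m x"
    proof (cases "snd (m i) \<subseteq> Vs n m x")
      case False
      hence sub: "Vs n m x - {i} \<subseteq> snd (m i)" using clo[OF iN g fi] by blast
      have "card (Vs n m x - {i}) \<ge> p" using big iG unfolding G_def by simp
      hence "Vs n m x - {i} = snd (m i)" using card_seteq[OF fs sub] c by simp
      then show ?thesis by auto
    qed
    then show ?thesis unfolding G_def using noin[OF iN] by auto
  qed
  have GN: "G \<subseteq> {1..n}" unfolding G_def Vs_def by auto
  show False
  proof (cases "G = {}")
    case False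
    then obtain i where i: "i \<in> G" by blast
    have "card G \<ge> p + 1" using closed_card[where X=G and n=n and j=i and p=p and m=m, OF GN i validp_msg[OF vm] Gcl[OF i]] GN i by auto
    hence "is_bloc n p m x G" using GN Gcl unfolding is_bloc_def G_def Vs_def by auto
    then show False using nob by blast
  next
    case True
    have oN: "1 \<in> {1..n}" using np p1 by auto
    have "snd (m 1) \<subseteq> Vs n m (oth x)"
    proof
      fix k assume k: "k \<in> snd (m 1)"
      have kN: "k \<in> {1..n}" using validpD[OF vm oN] k by auto
      have "k \<notin> G" using True by auto
      hence "fst (m k) \<noteq> x" using noin[OF oN k] kN unfolding G_def Vs_def by auto
      then show "k \<in> Vs n m (oth x)" using kN neq_oth unfolding Vs_def by auto
    qed
    moreover have "card (Vs n m (oth x)) < p" using Vs_card[of n m x] big np by simp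
    ultimately show False using small1[OF oN _ Vs_fin] by blast
  qed
qed

lemma cardV: "card (Vs n m x) = p"
  using stepA[of x] stepA[of "oth x"] Vs_card[of n m x] np by simp

lemma stepB1: "\<exists>i\<in>Vs n m x. i \<in> Sx n R x"
proof (rule ccontr)
  assume a: "\<not> ?thesis"
  have "Vs n m (oth x) \<noteq> {}" using cardV[of "oth x"] p1 by auto
  then obtain j where j: "j \<in> Vs n m (oth x)" by blast
  have jN: "j \<in> {1..n}" using j unfolding Vs_def by auto
  have "snd (m j) \<subseteq> Vs n m (oth x)"
  proof
    fix k assume k: "k \<in> snd (m j)"
    have kN: "k \<in> {1..n}" using validpD[OF vm jN] k by auto
    have "fst (m k) \<noteq> x" using noin[OF jN k] a kN unfolding Vs_def by auto
    then show "k \<in> Vs n m (oth x)" using kN neq_oth unfolding Vs_def by auto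
  qed
  then show False using small2[OF jN _ _ _ j] cardV by simp
qed

lemma stepB2:
  assumes iV: "i \<in> Vs n m x" and g: "i \<in> Sx n R x"
  shows "Vs n m x - {i} \<subseteq> snd (m i)"
proof -
  have iN: "i \<in> {1..n}" and fi: "fst (m i) = x" using iV unfolding Vs_def by auto
  have "\<not> snd (m i) \<subseteq> Vs n m x" using small2[OF iN _ _ _ iV] cardV by auto
  then show ?thesis using clo[OF iN g fi] by blast
qed

lemma stepB3:
  assumes iV: "i \<in> Vs n m x" shows "i \<in> Sx n R x"
proof -
  obtain j where j: "j \<in> Vs n m x" "j \<in> Sx n R x" using stepB1 by blast
  show ?thesis
  proof (cases "i = j")
    case False
    hence "i \<in> snd (m j)" using stepB2[OF j] iV by auto
    moreover have "j \<in> {1..n}" using j unfolding Vs_def by auto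
    ultimately show ?thesis using noin iV unfolding Vs_def by fastforce
  qed (use j in simp)
qed

lemma nobloc_main: "card (Sx n R x) = p \<and> eta_lot n p m x = 1/2"
proof
  have le: "card (Sx n R z) \<le> p" for z
  proof -
    have "Sx n R z \<subseteq> Vs n m z"
    proof
      fix i assume i: "i \<in> Sx n R z"
      have iN: "i \<in> {1..n}" using i unfolding Sx_def by auto
      show "i \<in> Vs n m z"
      proof (rule ccontr)
        assume "i \<notin> Vs n m z"
        hence "i \<in> Vs n m (oth z)" using iN Vs_union by blast
        hence "i \<in> Sx n R (oth z)" using stepB3 by blast
        then show False using Sx_oth[OF pr iN] i by simp
      qed
    qed
    then show ?thesis using card_mono[OF Vs_fin] cardV by metis
  qed
  show "card (Sx n R x) = p" using le[of x] le[of "oth x"] Sx_card[OF pr, of x] np by simp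
  show "eta_lot n p m x = 1/2"
    by (rule half[OF vm np p1 cardV]) (use stepB2 stepB3 in blast)
qed

end


lemma exist_bloc:
  assumes np: "n = 2*p" and p1: "p \<ge> 1" and pr: "\<forall>i\<in>{1..n}. strict_pref (R i)"
    and cS: "card (Sx n R x) \<ge> p + 1"
  shows "\<exists>m. nash_eq n p R m \<and> outcome n p m = deg x"
proof -
  define S where "S = Sx n R x"
  have SN: "S \<subseteq> {1..n}" unfolding S_def Sx_def by auto
  have ex: "\<exists>T. T \<subseteq> (if j \<in> S then S else {1..n}) - {j} \<and> card T = p" for j
  proof -
    have "card ((if j \<in> S then S else {1..n}) - {j}) \<ge> p"
    proof (cases "j \<in> S")
      case True
      have "finite S" using finite_subset[OF SN] by simp
      then show ?thesis using True cS unfolding S_def[symmetric] by (simp add: card_Diff_singleton)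
    next
      case False
      have "card ({1..n::nat} - {j}) \<ge> n - 1" by (simp add: card_Diff_singleton_if)
      then show ?thesis using False np p1 by simp
    qed
    then obtain T where "T \<subseteq> (if j \<in> S then S else {1..n}) - {j}" "card T = p"
      by (rule obtain_subset_with_card_n)
    then show ?thesis by blast
  qed
  define c where "c j = (SOME T. T \<subseteq> (if j \<in> S then S else {1..n}) - {j} \<and> card T = p)" for j
  have c: "c j \<subseteq> (if j \<in> S then S else {1..n}) - {j} \<and> card (c j) = p" for j
    unfolding c_def by (rule someI_ex[OF ex])
  define m where "m j = (x, c j)" for j
  have cN: "c j \<subseteq> {1..n} - {j}" for j using c[of j] SN by (auto split: if_splits)
  have cc: "card (c j) = p" for j using c by blast
  have cSS: "c j \<subseteq> S" if "j \<in> S" for j using c[of j] that by auto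
  have vm: "validp n p m" unfolding validp_def valid_msg_def m_def snd_conv using cN cc by blast
  have bl: "is_bloc n p m x S" unfolding is_bloc_def m_def using SN cS cSS unfolding S_def by auto
  have om: "outcome n p m = deg x" using outcome_bloc[OF np bl] .
  have "nash_eq n p R m"
    unfolding nash_eq_def
  proof (intro conjI ballI allI impI)
    show "valid_msg n p i (m i)" if "i \<in> {1..n}" for i using vm that unfolding validp_def by auto
    fix i d assume iN: "i \<in> {1..n}" and vd: "valid_msg n p i d"
    show "\<not> sd_strict R i (outcome n p (m(i := d))) (outcome n p m)"
    proof
      assume "sd_strict R i (outcome n p (m(i := d))) (outcome n p m)"
      then obtain z where z: "\<forall>w. R i z w" "outcome n p (m(i := d)) z > outcome n p m z"
        unfolding sd_strict_def by blast
      show False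
      proof (cases "i \<in> S")
        case True
        have "i \<in> Sx n R z" using z(1) iN unfolding Sx_def by auto
        have "z = x"
        proof (rule ccontr)
          assume "z \<noteq> x"
          hence "z = oth x" by (rule neq_oth)
          hence "i \<in> Sx n R (oth x)" using \<open>i \<in> Sx n R z\<close> by simp
          then show False using True Sx_oth[OF pr iN, of x] unfolding S_def by simp
        qed
        moreover have "outcome n p (m(i := d)) z \<le> 1"
          using outcome_le1[OF validp_upd[OF vm vd] np] p1 by simp
        ultimately show False using z(2) om by (simp add: deg_def)
      next
        case False
        hence "is_bloc n p (m(i:=d)) x S" using bl bloc_upd[of i S n p m d x] by simp
        from outcome_bloc[OF np this] om have "outcome n p (m(i := d)) = outcome n p m" by simp
        then show False using z(2) by simp
      qed
    qed
  qed
  then show ?thesis using om by blast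
qed

lemma exist_tie:
  assumes np: "n = 2*p" and p1: "p \<ge> 1" and pr: "\<forall>i\<in>{1..n}. strict_pref (R i)"
    and cS: "\<And>z. card (Sx n R z) = p"
  shows "\<exists>m. nash_eq n p R m \<and> outcome n p m = (\<lambda>_. 1/2)"
proof -
  define t where "t j = (if j \<in> Sx n R Alt_a then Alt_a else Alt_b)" for j
  have tS: "j \<in> Sx n R z \<longleftrightarrow> t j = z" if "j \<in> {1..n}" for j z
    using Sx_oth[OF pr that, of Alt_a] that unfolding t_def by (cases z) auto
  have ne: "Sx n R z \<noteq> {}" for z using cS[of z] p1 by auto
  define g where "g j = (SOME k. k \<in> Sx n R (oth (t j)))" for j
  have g: "g j \<in> Sx n R (oth (t j))" for j unfolding g_def using ne by (simp add: some_in_eq)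
  define c where "c j = insert (g j) (Sx n R (t j) - {j})" for j
  define m where "m j = (t j, c j)" for j
  have SN: "Sx n R z \<subseteq> {1..n}" for z unfolding Sx_def by auto
  have VS: "Vs n m z = Sx n R z" for z
  proof
    show "Vs n m z \<subseteq> Sx n R z" unfolding Vs_def m_def using tS by auto
    show "Sx n R z \<subseteq> Vs n m z" unfolding Vs_def m_def using tS SN[of z] by auto
  qed
  have gN1: "g j \<in> {1..n}" for j using g[of j] SN[of "oth (t j)"] by blast
  have gN2: "g j \<notin> Sx n R (t j)" for j
    using g[of j] Sx_oth[OF pr gN1[of j], of "t j"] by simp
  note gN = gN1 gN2
  have vm: "validp n p m" unfolding validp_def valid_msg_def
  proof (intro ballI conjI)
    fix j assume jN: "j \<in> {1..n}"
    have "j \<in> Sx n R (t j)" using tS[OF jN] by simp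
    hence "g j \<noteq> j" using gN(2)[of j] by auto
    then show "snd (m j) \<subseteq> {1..n} - {j}" unfolding m_def c_def using gN SN by auto
    have jS: "j \<in> Sx n R (t j)" using tS[OF jN] by simp
    have fS: "finite (Sx n R (t j))" using finite_subset[OF SN] by simp
    show "card (snd (m j)) = p" unfolding m_def c_def using gN(2)[of j] cS[of "t j"] p1 jS fS
      by (simp add: card_Diff_singleton)
  qed
  have nob: "\<forall>z B. \<not> is_bloc n p m z B"
  proof (intro allI notI)
    fix z B assume "is_bloc n p m z B"
    hence "B \<subseteq> Vs n m z" "card B \<ge> p + 1" unfolding is_bloc_def Vs_def by auto
    moreover have "card B \<le> card (Vs n m z)" using card_mono[OF Vs_fin] \<open>B \<subseteq> Vs n m z\<close> by blast
    ultimately show False using VS cS[of z] by simp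
  qed
  have cl: "Vs n m z - {i} \<subseteq> snd (m i)" if "i \<in> Vs n m z" for z i
  proof -
    have "i \<in> {1..n}" "t i = z" using that unfolding Vs_def m_def by auto
    then show ?thesis unfolding VS m_def c_def by auto
  qed
  have cV: "card (Vs n m z) = p" for z using VS cS by simp
  have half_m: "eta_lot n p m z = 1/2" for z by (rule half[OF vm np p1 cV cl])
  have om: "outcome n p m = (\<lambda>_. 1/2)" using outcome_nobloc[OF nob] half_m by auto
  have Pm: "real (Pc n m z) / (real n * real p) = 1/2" for z using half_m[of z] eta_P[OF vm, of z] by linarith
  have "nash_eq n p R m"
    unfolding nash_eq_def
  proof (intro conjI ballI allI impI)
    show "valid_msg n p i (m i)" if "i \<in> {1..n}" for i using vm that unfolding validp_def by auto
    fix i d assume iN: "i \<in> {1..n}" and vd: "valid_msg n p i d"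
    let ?m = "m(i:=d)"
    have vm': "validp n p ?m" using validp_upd[OF vm vd] .
    show "\<not> sd_strict R i (outcome n p ?m) (outcome n p m)"
    proof
      assume "sd_strict R i (outcome n p ?m) (outcome n p m)"
      then obtain z where z: "\<forall>w. R i z w" "outcome n p ?m z > 1/2"
        unfolding sd_strict_def om by blast
      have "i \<in> Sx n R z" using z(1) iN unfolding Sx_def by auto
      hence iV: "i \<in> Vs n m z" using VS by simp
      have VV: "Vs n ?m z \<subseteq> Vs n m z" using iV unfolding Vs_def by auto
      have noz: "\<not> is_bloc n p ?m z B" for B
      proof
        assume Bb: "is_bloc n p ?m z B"
        have "B \<subseteq> Vs n ?m z" using Bb unfolding is_bloc_def Vs_def by blast
        hence "B \<subseteq> Vs n m z" using VV by blast
        moreover have "card B \<ge> p + 1" using Bb unfolding is_bloc_def by blast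
        moreover have "card B \<le> card (Vs n m z)" using card_mono[OF Vs_fin] \<open>B \<subseteq> Vs n m z\<close> by blast
        ultimately show False using cV[of z] by simp
      qed
      have "outcome n p ?m z \<le> 1/2"
      proof (cases "\<exists>B. is_bloc n p ?m (oth z) B")
        case True
        then show ?thesis using outcome_bloc[OF np] by (auto simp: deg_def)
      next
        case False
        hence "\<forall>y B. \<not> is_bloc n p ?m y B" using nob_from[of n p ?m z] noz by blast
        hence o': "outcome n p ?m = eta_lot n p ?m" by (rule outcome_nobloc)
        have "Pc n ?m z \<le> Pc n m z" unfolding Pc_Vs
        proof (rule sum_mono)
          fix j assume jN: "j \<in> {1..n}"
          show "card (snd (?m j) \<inter> Vs n ?m z) \<le> card (snd (m j) \<inter> Vs n m z)"
          proof (cases "j = i")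
            case False
            have f: "finite (snd (m j) \<inter> Vs n m z)" by simp
            have "snd (m j) \<inter> Vs n ?m z \<subseteq> snd (m j) \<inter> Vs n m z" using VV by blast
            from card_mono[OF f this] show ?thesis using False by simp
          next
            case True
            have "snd d \<inter> Vs n ?m z \<subseteq> Vs n m z - {i}" using vd VV unfolding valid_msg_def by auto
            hence "card (snd d \<inter> Vs n ?m z) \<le> card (Vs n m z - {i})" by (simp add: card_mono)
            moreover have "snd (m i) \<inter> Vs n m z = Vs n m z - {i}"
              using cl[OF iV] validpD[OF vm iN] by auto
            ultimately show ?thesis using True by simp
          qed
        qed
        hence "real (Pc n ?m z) / (real n * real p) \<le> real (Pc n m z) / (real n * real p)"
          by (simp add: divide_right_mono)
        then show ?thesis using o' eta_P[OF vm', of z] Pm[of z] by simp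
      qed
      then show False using z(2) by simp
    qed
  qed
  then show ?thesis using om by blast
qed


theorem lemma3:
  fixes n p :: nat and R :: "nat \<Rightarrow> alt \<Rightarrow> alt \<Rightarrow> bool"
  assumes "n = 2 * p" and "p \<ge> 1"
    and "\<forall>i\<in>{1..n}. strict_pref (R i)"
  shows "(\<forall>x. maj n p R = {x} \<longrightarrow> NE_outcomes n p R = {deg x})
       \<and> (maj n p R = {Alt_a, Alt_b} \<longrightarrow> NE_outcomes n p R = {(\<lambda>_. 1 / 2)})"
proof
  note np = assms(1) and p1 = assms(2) and pr = assms(3)
  show "\<forall>x. maj n p R = {x} \<longrightarrow> NE_outcomes n p R = {deg x}"
  proof (intro allI impI)
    fix x assume mx: "maj n p R = {x}"
    have cS: "card (Sx n R x) \<ge> p + 1" using maj_single[OF pr np mx] .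
    show "NE_outcomes n p R = {deg x}"
    proof
      show "NE_outcomes n p R \<subseteq> {deg x}"
      proof
        fix \<beta> assume "\<beta> \<in> NE_outcomes n p R"
        then obtain m where ne: "nash_eq n p R m" and b: "\<beta> = outcome n p m"
          unfolding NE_outcomes_def by blast
        have no: "\<not> is_bloc n p m (oth x) B" for B
        proof
          assume Bb: "is_bloc n p m (oth x) B"
          have "p \<le> card (Sx n R x)" using cS by simp
          from no_bloc_against[OF ne this Bb np p1 pr] show False .
        qed
        have "\<exists>B. is_bloc n p m x B"
        proof (rule ccontr)
          assume "\<not> ?thesis"
          hence "\<forall>z B. \<not> is_bloc n p m z B" using nob_from[of n p m x] no by blast
          from nobloc_main[OF np p1 pr ne this, of x] cS show False by simp
        qed
        then show "\<beta> \<in> {deg x}" using b outcome_bloc[OF np] by blast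
      qed
      obtain m where "nash_eq n p R m" "outcome n p m = deg x" using exist_bloc[OF np p1 pr cS] by blast
      then have "deg x = outcome n p m \<and> nash_eq n p R m" by simp
      then show "{deg x} \<subseteq> NE_outcomes n p R" unfolding NE_outcomes_def by blast
    qed
  qed
  show "maj n p R = {Alt_a, Alt_b} \<longrightarrow> NE_outcomes n p R = {(\<lambda>_. 1 / 2)}"
  proof
    assume mt: "maj n p R = {Alt_a, Alt_b}"
    have cS: "card (Sx n R z) = p" for z using maj_tie[OF pr np mt] .
    show "NE_outcomes n p R = {(\<lambda>_. 1 / 2)}"
    proof
      show "NE_outcomes n p R \<subseteq> {(\<lambda>_. 1 / 2)}"
      proof
        fix \<beta> assume "\<beta> \<in> NE_outcomes n p R"
        then obtain m where ne: "nash_eq n p R m" and b: "\<beta> = outcome n p m"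
          unfolding NE_outcomes_def by blast
        have nob: "\<forall>z B. \<not> is_bloc n p m z B"
        proof (intro allI notI)
          fix z B assume "is_bloc n p m z B"
          hence Bb: "is_bloc n p m (oth (oth z)) B" by simp
          have "p \<le> card (Sx n R (oth z))" using cS by simp
          from no_bloc_against[OF ne this Bb np p1 pr] show False .
        qed
        have "outcome n p m = (\<lambda>_. 1/2)"
          using outcome_nobloc[OF nob] nobloc_main[OF np p1 pr ne nob] by auto
        then show "\<beta> \<in> {(\<lambda>_. 1 / 2)}" using b by simp
      qed
      obtain m where "nash_eq n p R m" "outcome n p m = (\<lambda>_. 1/2)" using exist_tie[OF np p1 pr cS] by blast
      then have "(\<lambda>_. 1/2) = outcome n p m \<and> nash_eq n p R m" by simp
      then show "{(\<lambda>_. 1 / 2)} \<subseteq> NE_outcomes n p R" unfolding NE_outcomes_def by blast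
    qed
  qed
qed

end
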